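(* Let $n\geq 3$ be an integer and $p$ a prime with $\gcd(n,p(p-1))=1$. Then: (i) for every integer $r\geq\lfloor n/2\rfloor+1$ and all nonzero integers $a_1,\ldots,a_r$, the form $F=a_1x_1^n+\cdots+a_rx_r^n$ satisfies that $R(F)$ is dense in $\mathbb{Q}_p$; (ii) there exist nonzero integers $a_1,\ldots,a_s$ with $s=\lfloor n/2\rfloor$ such that for $F=a_1x_1^n+\cdots+a_sx_s^n$ the set $R(F)$ is not dense in $\mathbb{Q}_p$. Thus $\lfloor n/2\rfloor+1=\lceil (n+1)/2\rceil$ is the least $r$ such that every integral diagonal form of degree $n$ with all coefficients nonzero in at least $r$ variables has $R(F)$ dense in $\mathbb{Q}_p$.
   Context: For an integral form $F$ in $r$ variables, $R(F)=\{F(\overline{x})/F(\overline{y}):\overline{x},\overline{y}\in\mathbb{Z}^r,\ F(\overline{y})\neq 0\}$, viewed as a subset of the field $\mathbb{Q}_p$ of $p$-adic numbers with its $p$-adic topology. *)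

theory Defs
  imports Complex_Main "HOL-Computational_Algebra.Computational_Algebra"
begin

definition diag_form :: "nat \<Rightarrow> nat \<Rightarrow> (nat \<Rightarrow> int) \<Rightarrow> (nat \<Rightarrow> int) \<Rightarrow> int" where
  "diag_form r n a x = (\<Sum>i<r. a i * x i ^ n)"

definition ratio_set :: "nat \<Rightarrow> ((nat \<Rightarrow> int) \<Rightarrow> int) \<Rightarrow> rat set" where
  "ratio_set r F = {of_int (F x) / of_int (F y) | x y.
      (\<forall>i\<ge>r. x i = 0) \<and> (\<forall>i\<ge>r. y i = 0) \<and> F y \<noteq> 0}"

definition padic_val_rat :: "nat \<Rightarrow> rat \<Rightarrow> int" where
  "padic_val_rat p q =
     int (multiplicity (int p) (fst (quotient_of q))) - int (multiplicity (int p) (snd (quotient_of q)))"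

definition padic_abs :: "nat \<Rightarrow> rat \<Rightarrow> real" where
  "padic_abs p q = (if q = 0 then 0 else real p powr (- real_of_int (padic_val_rat p q)))"

text \<open>A set S of rationals is dense in Q_p (Q being dense in Q_p, this is
  equivalent to: every rational is a p-adic limit of elements of S).\<close>
definition padic_dense :: "nat \<Rightarrow> rat set \<Rightarrow> bool" where
  "padic_dense p S \<longleftrightarrow> (\<forall>q::rat. \<forall>\<epsilon>::real. \<epsilon> > 0 \<longrightarrow> (\<exists>s\<in>S. padic_abs p (s - q) < \<epsilon>))"

end

theory Submission
  imports Defs "HOL-Number_Theory.Number_Theory"
begin


lemma euler_int:
  fixes a m :: int
  assumes "coprime a m" "m > 1"
  shows "[a ^ totient (nat m) = 1] (mod m)"
proof -
  interpret residues m "residue_ring m" by (unfold_locales) (use assms in auto)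
  show ?thesis using euler_theorem assms by simp
qed

lemma nth_root_mod:
  fixes n p N :: nat and u :: int
  assumes "prime p" "coprime n (p * (p - 1))" "n > 0" "\<not> int p dvd u"
  shows "\<exists>z. [z ^ n = u] (mod int p ^ N)"
proof (cases "N = 0")
  case True then show ?thesis by auto
next
  case False
  define phi where "phi = totient (p ^ N)"
  have phi: "phi = p ^ (N - 1) * (p - 1)" using totient_prime_power[of p N] assms False
    by (simp add: phi_def)
  have cp: "coprime n p" "coprime n (p - 1)" using assms(2) by auto
  have "coprime n phi" unfolding phi using cp by simp
  hence "gcd n phi = 1" by simp
  then obtain x y where xy: "n * x = phi * y + 1" using bezout_nat[of n phi] assms(3) by auto
  have p1: "int p ^ N > 1" using False prime_gt_1_nat[OF assms(1)]
    by (metis of_nat_1 of_nat_less_iff of_nat_power one_less_power neq0_conv)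
  have pi: "prime (int p)" using assms(1) by simp
  have "coprime u (int p)" using assms(4) pi
    by (metis coprime_commute prime_imp_coprime)
  hence cu: "coprime u (int p ^ N)" by simp
  have nat_eq: "nat (int p ^ N) = p ^ N" by (simp add: nat_power_eq)
  have e: "[u ^ phi = 1] (mod int p ^ N)" using euler_int[OF cu p1] nat_eq phi_def by simp
  have "(u ^ x) ^ n = (u ^ phi) ^ y * u"
    by (metis xy power_mult power_add power_one_right mult.commute)
  also have "[\<dots> = 1 ^ y * u] (mod int p ^ N)"
    by (intro cong_mult cong_pow e cong_refl)
  finally show ?thesis by auto
qed

lemma unit_solve:
  fixes n p N :: nat and al w :: int
  assumes "prime p" "coprime n (p * (p - 1))" "n > 0" "\<not> int p dvd al" "\<not> int p dvd w"
  shows "\<exists>z. int p ^ N dvd (al * z ^ n - w)"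
proof (cases "N = 0")
  case True then show ?thesis by auto
next
  case False
  have pi: "prime (int p)" using assms(1) by simp
  have "coprime al (int p)" using assms(4) pi
    by (metis coprime_commute prime_imp_coprime)
  hence "coprime al (int p ^ N)" by simp
  then obtain b where b: "[al * b = 1] (mod int p ^ N)" using cong_solve_coprime_int by blast
  have "\<not> int p dvd b * w"
  proof
    assume "int p dvd b * w"
    hence "int p dvd b" using assms(5) pi by (simp add: prime_dvd_mult_iff)
    hence "int p dvd al * b" by simp
    moreover have "int p dvd int p ^ N" using False by (intro dvd_power) auto
    ultimately have "int p dvd 1" using cong_dvd_modulus[OF b \<open>int p dvd int p ^ N\<close>]
      using cong_dvd_iff by blast
    thus False using pi not_prime_unit by blast
  qed
  then obtain z where z: "[z ^ n = b * w] (mod int p ^ N)"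
    using nth_root_mod[OF assms(1-3)] by blast
  have "[al * z ^ n = al * (b * w)] (mod int p ^ N)" by (intro cong_mult cong_refl z)
  also have "al * (b * w) = (al * b) * w" by simp
  also have "[\<dots> = 1 * w] (mod int p ^ N)" by (intro cong_mult cong_refl b)
  finally have "[al * z ^ n = w] (mod int p ^ N)" by simp
  thus ?thesis by (metis cong_iff_dvd_diff)
qed

lemma val_rat_int:
  fixes X Y :: int
  assumes "prime p" "X \<noteq> 0" "Y \<noteq> 0"
  shows "padic_val_rat p (of_int X / of_int Y) =
         int (multiplicity (int p) X) - int (multiplicity (int p) Y)"
proof -
  obtain a b where ab: "quotient_of (of_int X / of_int Y) = (a, b)" by (cases "quotient_of (of_int X / of_int Y)")
  have bpos: "b > 0" using quotient_of_denom_pos[OF ab] .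
  have q: "(of_int X / of_int Y :: rat) = of_int a / of_int b" using quotient_of_div[OF ab] .
  have a0: "a \<noteq> 0" using q assms bpos by auto
  have "(of_int X :: rat) * of_int b = of_int a * of_int Y" using q assms bpos
    by (subst (asm) frac_eq_eq) auto
  hence "(of_int (a * Y) :: rat) = of_int (X * b)" by (simp only: of_int_mult ac_simps)
  hence eq: "a * Y = X * b" by (simp only: of_int_eq_iff)
  have pi: "prime_elem (int p)" using assms(1) by simp
  have "multiplicity (int p) (a * Y) = multiplicity (int p) (X * b)" by (simp only: eq)
  hence "multiplicity (int p) a + multiplicity (int p) Y = multiplicity (int p) X + multiplicity (int p) b"
    using prime_elem_multiplicity_mult_distrib[OF pi] a0 assms bpos by simp
  thus ?thesis unfolding padic_val_rat_def ab by simp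
qed

lemma abs_rat_int:
  fixes X Y :: int
  assumes "prime p" "X \<noteq> 0" "Y \<noteq> 0"
  shows "padic_abs p (of_int X / of_int Y) =
         real p powr (- (real (multiplicity (int p) X) - real (multiplicity (int p) Y)))"
  using val_rat_int[OF assms] assms unfolding padic_abs_def by simp

lemma mult_add_higher:
  fixes a b :: int
  assumes "prime p" "a \<noteq> 0" "int p ^ (multiplicity (int p) a + 1) dvd b"
  shows "multiplicity (int p) (a + b) = multiplicity (int p) a"
proof -
  have pi: "prime (int p)" using assms(1) by simp
  obtain a' where a': "a = int p ^ multiplicity (int p) a * a'" "\<not> int p dvd a'"
    by (rule multiplicity_decompose'[of a "int p"]) (use assms(2) pi not_prime_unit in blast)+
  obtain c where c: "b = int p ^ (multiplicity (int p) a + 1) * c" using assms(3) by blast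
  have eq: "a + b = int p ^ multiplicity (int p) a * (a' + int p * c)"
    using a' c by (simp add: algebra_simps)
  moreover have nd: "\<not> int p dvd (a' + int p * c)" using a'(2)
    using dvd_add_left_iff[OF dvd_triv_left[of "int p" c], of a'] by simp
  show ?thesis by (rule multiplicity_decomposeI[OF eq nd]) (use pi in simp)
qed



lemma mult_term:
  assumes "prime p" "X \<noteq> 0"
  shows "multiplicity (int p) (int p ^ l * X ^ n) = l + n * multiplicity (int p) X"
proof -
  have pi: "prime_elem (int p)" using assms(1) by simp
  have "int p ^ l \<noteq> 0" using assms(1) by (simp add: prime_gt_0_nat)
  moreover have "X ^ n \<noteq> 0" using assms(2) by simp
  ultimately have "multiplicity (int p) (int p ^ l * X ^ n) =
     multiplicity (int p) (int p ^ l) + multiplicity (int p) (X ^ n)"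
    using prime_elem_multiplicity_mult_distrib[OF pi] by blast
  also have "\<dots> = l + n * multiplicity (int p) X"
    using pi assms(2) by (simp add: prime_elem_multiplicity_power_distrib)
  finally show ?thesis .
qed

lemma val_diag_mod:
  fixes x :: "nat \<Rightarrow> int"
  assumes p: "prime p" and n: "n > 0" and sn: "s \<le> n"
    and nz: "diag_form s n (\<lambda>i. int p ^ i) x \<noteq> 0"
  shows "multiplicity (int p) (diag_form s n (\<lambda>i. int p ^ i) x) mod n < s"
proof -
  define tm where "tm l = int p ^ l * x l ^ n" for l
  define v where "v l = l + n * multiplicity (int p) (x l)" for l
  define T where "T = {l \<in> {..<s}. x l \<noteq> 0}"
  have F: "diag_form s n (\<lambda>i. int p ^ i) x = (\<Sum>l<s. tm l)"
    unfolding diag_form_def tm_def by simp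
  have "T \<noteq> {}"
  proof
    assume "T = {}"
    hence "\<forall>l<s. tm l = 0" unfolding T_def tm_def using n by auto
    hence "(\<Sum>l<s. tm l) = 0" by simp
    thus False using nz F by simp
  qed
  have fT: "finite T" unfolding T_def by simp
  define mu where "mu = Min (v ` T)"
  have "mu \<in> v ` T" unfolding mu_def using fT \<open>T \<noteq> {}\<close> by (intro Min_in) auto
  then obtain l0 where l0: "l0 \<in> T" "v l0 = mu" by auto
  have mule: "mu \<le> v l" if "l \<in> T" for l unfolding mu_def using fT that by (intro Min_le) auto
  have l0s: "l0 < s" "x l0 \<noteq> 0" using l0(1) unfolding T_def by auto
  have mt: "multiplicity (int p) (tm l) = v l" if "x l \<noteq> 0" for l
    unfolding tm_def v_def using mult_term[OF p that] .
  have vmod: "v l mod n = l" if "l < s" for l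
    unfolding v_def using that sn by simp
  have dv: "int p ^ (mu + 1) dvd tm l" if "l \<in> {..<s} - {l0}" for l
  proof (cases "x l = 0")
    case True then show ?thesis unfolding tm_def using n by (simp add: zero_power)
  next
    case False
    hence lT: "l \<in> T" using that unfolding T_def by auto
    have "v l \<noteq> mu"
    proof
      assume "v l = mu"
      hence "v l mod n = v l0 mod n" using l0 by simp
      hence "l = l0" using vmod[of l] vmod[of l0] that l0s by simp
      thus False using that by simp
    qed
    hence "mu + 1 \<le> v l" using mule[OF lT] by simp
    hence "mu + 1 \<le> multiplicity (int p) (tm l)" using mt[OF False] by simp
    thus ?thesis by (rule multiplicity_dvd')
  qed
  have split: "(\<Sum>l<s. tm l) = tm l0 + (\<Sum>l\<in>{..<s} - {l0}. tm l)"
    using l0s(1) by (simp add: sum.remove)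
  have tm0: "tm l0 \<noteq> 0" unfolding tm_def using l0s p by (simp add: prime_gt_0_nat)
  have "int p ^ (multiplicity (int p) (tm l0) + 1) dvd (\<Sum>l\<in>{..<s} - {l0}. tm l)"
    unfolding mt[OF l0s(2)] l0(2) by (rule dvd_sum) (rule dv)
  hence "multiplicity (int p) (\<Sum>l<s. tm l) = multiplicity (int p) (tm l0)"
    using mult_add_higher[OF p tm0] split by simp
  hence "multiplicity (int p) (diag_form s n (\<lambda>i. int p ^ i) x) = v l0"
    using F mt[OF l0s(2)] by simp
  thus ?thesis using vmod[OF l0s(1)] l0s(1) by simp
qed

lemma part2:
  fixes n p :: nat
  assumes p: "prime p" and n3: "n \<ge> 3"
  shows "\<not> padic_dense p (ratio_set (n div 2) (diag_form (n div 2) n (\<lambda>i. int p ^ i)))"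
proof
  define s where "s = n div 2"
  define F where "F = diag_form s n (\<lambda>i. int p ^ i)"
  assume "padic_dense p (ratio_set (n div 2) (diag_form (n div 2) n (\<lambda>i. int p ^ i)))"
  hence D: "padic_dense p (ratio_set s F)" unfolding s_def F_def .
  have s1: "s \<ge> 1" "2 * s \<le> n" using n3 unfolding s_def by auto
  have n0: "n > 0" using n3 by simp
  have pg: "real p > 1" using prime_gt_1_nat[OF p] by simp
  have pi: "prime (int p)" using p by simp
  have pe: "prime_elem (int p)" using p by simp
  have pz: "int p ^ s \<noteq> 0" using p by (simp add: prime_gt_0_nat)
  obtain t where t: "t \<in> ratio_set s F" and
    lt: "padic_abs p (t - of_int (int p ^ s)) < real p powr (- real s)"
    using D unfolding padic_dense_def
    by (metis powr_gt_zero pg less_numeral_extra(3) not_one_less_zero of_nat_0 zero_less_one)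
  then obtain x y where xy: "t = of_int (F x) / of_int (F y)" "F y \<noteq> 0"
    unfolding ratio_set_def by blast
  define X where "X = F x"
  define Y where "Y = F y"
  have Y0: "Y \<noteq> 0" using xy Y_def by simp
  define Z where "Z = X - int p ^ s * Y"
  have tq: "t - of_int (int p ^ s) = of_int Z / of_int Y"
    using xy Y0 unfolding Z_def X_def Y_def by (simp add: field_simps)
  have mPY: "multiplicity (int p) (int p ^ s * Y) = s + multiplicity (int p) Y"
    using prime_elem_multiplicity_mult_distrib[OF pe pz Y0] pe by simp
  have mX: "multiplicity (int p) X = s + multiplicity (int p) Y"
  proof (cases "Z = 0")
    case True
    hence "X = int p ^ s * Y" unfolding Z_def by simp
    thus ?thesis using mPY by simp
  next
    case False
    have "real p powr (- (real (multiplicity (int p) Z) - real (multiplicity (int p) Y)))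
       < real p powr (- real s)"
      using lt tq abs_rat_int[OF p False Y0] by simp
    hence "real s < real (multiplicity (int p) Z) - real (multiplicity (int p) Y)"
      using pg by (simp add: powr_less_cancel_iff)
    hence "multiplicity (int p) (int p ^ s * Y) + 1 \<le> multiplicity (int p) Z"
      using mPY by linarith
    hence dz: "int p ^ (multiplicity (int p) (int p ^ s * Y) + 1) dvd Z"
      by (rule multiplicity_dvd')
    have "X = int p ^ s * Y + Z" unfolding Z_def by simp
    hence "multiplicity (int p) X = multiplicity (int p) (int p ^ s * Y)"
      using mult_add_higher[OF p _ dz] pz Y0 by simp
    thus ?thesis using mPY by simp
  qed
  have X0: "X \<noteq> 0" using mX s1 by (metis multiplicity_zero add_is_0 not_one_le_zero)
  have a: "multiplicity (int p) X mod n < s"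
    using val_diag_mod[OF p n0 _ ] X0 s1 unfolding X_def F_def by simp
  have b: "multiplicity (int p) Y mod n < s"
    using val_diag_mod[OF p n0 _ ] Y0 s1 unfolding Y_def F_def by simp
  define mY where "mY = multiplicity (int p) Y"
  have "multiplicity (int p) X mod n = (mY mod n + s) mod n"
    using mX unfolding mY_def by (simp add: mod_add_right_eq add.commute)
  also have "\<dots> = mY mod n + s" using b s1 unfolding mY_def by simp
  finally show False using a by simp
qed



lemma diag_single:
  assumes "i < r" "n > 0"
  shows "diag_form r n a (\<lambda>l. if l = i then X else 0) = a i * X ^ n"
proof -
  have "diag_form r n a (\<lambda>l. if l = i then X else 0) = (\<Sum>l<r. if l = i then a i * X ^ n else 0)"
    unfolding diag_form_def using assms(2) by (intro sum.cong) (auto simp: zero_power)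
  also have "\<dots> = a i * X ^ n" using assms(1) by simp
  finally show ?thesis .
qed

lemma diag_two:
  assumes "i < r" "j < r" "i \<noteq> j" "n > 0"
  shows "diag_form r n a (\<lambda>l. if l = i then X else if l = j then Y else 0) = a i * X ^ n + a j * Y ^ n"
proof -
  have "diag_form r n a (\<lambda>l. if l = i then X else if l = j then Y else 0) =
     (\<Sum>l<r. (if l = i then a i * X ^ n else 0) + (if l = j then a j * Y ^ n else 0))"
    unfolding diag_form_def using assms by (intro sum.cong) (auto simp: zero_power)
  also have "\<dots> = a i * X ^ n + a j * Y ^ n" using assms by (simp add: sum.distrib)
  finally show ?thesis .
qed

definition Good :: "nat \<Rightarrow> nat \<Rightarrow> nat \<Rightarrow> (nat \<Rightarrow> int) \<Rightarrow> nat \<Rightarrow> bool" where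
  "Good p r n a e \<longleftrightarrow> (\<forall>w N. \<not> int p dvd w \<longrightarrow> (\<exists>x. (\<forall>l\<ge>r. x l = 0) \<and>
      int p ^ (e + N) dvd (diag_form r n a x - int p ^ e * w)))"

lemma decomp:
  assumes "prime p" "c \<noteq> 0"
  shows "c = int p ^ multiplicity (int p) c * (c div int p ^ multiplicity (int p) c)
     \<and> \<not> int p dvd (c div int p ^ multiplicity (int p) c)"
proof -
  have "prime (int p)" using assms(1) by simp
  hence "\<not> is_unit (int p)" using not_prime_unit by blast
  hence "\<not> int p dvd (c div int p ^ multiplicity (int p) c)"
    using multiplicity_decompose[of c "int p"] assms(2) by blast
  moreover have "int p ^ multiplicity (int p) c dvd c" by (rule multiplicity_dvd)
  ultimately show ?thesis by simp
qed

lemma good_single: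
  assumes p: "prime p" and cp: "coprime n (p * (p - 1))" and n: "n > 0"
    and i: "i < r" and ai: "a i \<noteq> 0"
  shows "Good p r n a (multiplicity (int p) (a i) + n * t)"
  unfolding Good_def
proof (intro allI impI)
  fix w N assume w: "\<not> int p dvd w"
  define v where "v = multiplicity (int p) (a i)"
  define al where "al = a i div int p ^ v"
  have dec: "a i = int p ^ v * al" "\<not> int p dvd al"
    using decomp[OF p ai] unfolding v_def al_def by auto
  obtain z where z: "int p ^ N dvd (al * z ^ n - w)"
    using unit_solve[OF p cp n dec(2) w] by blast
  define x where "x = (\<lambda>l. if l = i then int p ^ t * z else 0)"
  have Fx: "diag_form r n a x = a i * (int p ^ t * z) ^ n"
    unfolding x_def using diag_single[OF i n] .
  have pw: "(int p ^ t * z) ^ n = int p ^ (n * t) * z ^ n"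
    by (simp add: power_mult_distrib power_mult[symmetric] mult.commute)
  have "diag_form r n a x - int p ^ (v + n * t) * w = int p ^ (v + n * t) * (al * z ^ n - w)"
    unfolding Fx dec(1) pw by (simp add: power_mult_distrib power_add power_mult algebra_simps)
  moreover have "int p ^ (v + n * t + N) dvd int p ^ (v + n * t) * (al * z ^ n - w)"
    using z by (simp add: power_add mult_dvd_mono)
  ultimately have "int p ^ (v + n * t + N) dvd (diag_form r n a x - int p ^ (v + n * t) * w)"
    by simp
  moreover have "\<forall>l\<ge>r. x l = 0" unfolding x_def using i by auto
  ultimately show "\<exists>x. (\<forall>l\<ge>r. x l = 0) \<and>
      int p ^ (multiplicity (int p) (a i) + n * t + N) dvd
        (diag_form r n a x - int p ^ (multiplicity (int p) (a i) + n * t) * w)"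
    unfolding v_def by blast
qed

lemma good_pair:
  assumes p: "prime p" and cp: "coprime n (p * (p - 1))" and n: "n > 0"
    and i: "i < r" and j: "j < r" and ij: "i \<noteq> j" and ai: "a i \<noteq> 0" and aj: "a j \<noteq> 0"
    and vj: "multiplicity (int p) (a j) = multiplicity (int p) (a i) + n * t"
    and e: "e \<ge> multiplicity (int p) (a j) + 1"
  shows "Good p r n a e"
  unfolding Good_def
proof (intro allI impI)
  fix w N assume w: "\<not> int p dvd w"
  define vi where "vi = multiplicity (int p) (a i)"
  define vj where "vj = multiplicity (int p) (a j)"
  define ali where "ali = a i div int p ^ vi"
  define alj where "alj = a j div int p ^ vj"
  have deci: "a i = int p ^ vi * ali" "\<not> int p dvd ali"
    using decomp[OF p ai] unfolding vi_def ali_def by auto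
  have decj: "a j = int p ^ vj * alj" "\<not> int p dvd alj"
    using decomp[OF p aj] unfolding vj_def alj_def by auto
  define D where "D = e - vj"
  have D1: "D \<ge> 1" and eD: "e = vj + D" using e unfolding D_def vj_def by auto
  define u where "u = int p ^ D * w - alj"
  have u: "\<not> int p dvd u"
  proof
    assume "int p dvd u"
    moreover have "int p dvd int p ^ D * w" using D1 by (simp add: dvd_power)
    moreover have "alj = int p ^ D * w - u" unfolding u_def by simp
    ultimately have "int p dvd alj" by (simp add: dvd_diff)
    thus False using decj(2) by simp
  qed
  obtain z where z: "int p ^ (D + N) dvd (ali * z ^ n - u)"
    using unit_solve[OF p cp n deci(2) u] by blast
  define x where "x = (\<lambda>l. if l = i then int p ^ t * z else if l = j then 1 else 0)"
  have Fx: "diag_form r n a x = a i * (int p ^ t * z) ^ n + a j * 1 ^ n"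
    unfolding x_def using diag_two[OF i j ij n] .
  have vji: "vj = vi + n * t" using vj unfolding vi_def vj_def .
  have pw: "(int p ^ t * z) ^ n = int p ^ (n * t) * z ^ n"
    by (simp add: power_mult_distrib power_mult[symmetric] mult.commute)
  have "diag_form r n a x - int p ^ e * w = int p ^ vj * (ali * z ^ n - u)"
    unfolding Fx pw deci(1) decj(1) eD u_def vji
    by (simp add: power_mult_distrib power_add power_mult algebra_simps)
  moreover have "int p ^ (e + N) dvd int p ^ vj * (ali * z ^ n - u)"
    using z unfolding eD by (simp add: power_add mult_dvd_mono)
  moreover have "\<forall>l\<ge>r. x l = 0" unfolding x_def using i j by auto
  ultimately show "\<exists>x. (\<forall>l\<ge>r. x l = 0) \<and>
      int p ^ (e + N) dvd (diag_form r n a x - int p ^ e * w)"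
    by metis
qed



lemma exists_e:
  fixes k :: int
  assumes p: "prime p" and cp: "coprime n (p * (p - 1))" and n3: "n \<ge> 3"
    and r: "n div 2 + 1 \<le> r" and a: "\<forall>i<r. a i \<noteq> 0"
  shows "\<exists>e1 e2. Good p r n a e1 \<and> Good p r n a e2 \<and> int e1 - int e2 = k"
proof -
  define m where "m = n div 2 + 1"
  define v where "v i = multiplicity (int p) (a i)" for i
  define f where "f i = int (v i) mod int n" for i
  have n0: "n > 0" using n3 by simp
  have mr: "\<And>i. i < m \<Longrightarrow> i < r" and mn: "2 * m > n" using r unfolding m_def by auto
  show ?thesis
  proof (cases "inj_on f {..<m}")
    case True
    define g where "g j = (int (v j) + k) mod int n" for j
    have injg: "inj_on g {..<m}"
    proof (rule inj_onI)
      fix x y assume xy: "x \<in> {..<m}" "y \<in> {..<m}" "g x = g y"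
      hence "[int (v x) + k = int (v y) + k] (mod int n)" unfolding g_def cong_def by simp
      hence "[int (v x) = int (v y)] (mod int n)" using cong_add_rcancel by blast
      hence "f x = f y" unfolding f_def cong_def .
      thus "x = y" using True xy by (meson inj_onD)
    qed
    define A where "A = f ` {..<m}"
    define B where "B = g ` {..<m}"
    have cA: "card A = m" unfolding A_def using card_image[OF True] by simp
    have cB: "card B = m" unfolding B_def using card_image[OF injg] by simp
    have sub: "A \<union> B \<subseteq> {0..<int n}" unfolding A_def B_def f_def g_def using n0 by auto
    have "card (A \<union> B) \<le> card {0..<int n}" by (rule card_mono[OF _ sub]) simp
    hence cU: "card (A \<union> B) \<le> n" by simp
    have "card A + card B = card (A \<union> B) + card (A \<inter> B)"
      by (rule card_Un_Int) (auto simp: A_def B_def)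
    hence "card (A \<inter> B) > 0" using cA cB cU mn by linarith
    hence "A \<inter> B \<noteq> {}" by (metis card.empty less_irrefl)
    then obtain i j where ij: "i < m" "j < m" "f i = g j" unfolding A_def B_def by auto
    hence "int n dvd (int (v j) + k - int (v i))" unfolding f_def g_def
      by (metis mod_eq_dvd_iff)
    then obtain d where d: "int (v j) + k - int (v i) = int n * d" by blast
    define e1 where "e1 = v i + n * nat d"
    define e2 where "e2 = v j + n * nat (- d)"
    have g1: "Good p r n a e1" unfolding e1_def v_def
      using good_single[OF p cp n0 mr[OF ij(1)]] a mr[OF ij(1)] by blast
    have g2: "Good p r n a e2" unfolding e2_def v_def
      using good_single[OF p cp n0 mr[OF ij(2)]] a mr[OF ij(2)] by blast
    have "int (nat d) - int (nat (-d)) = d" by simp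
    hence "int e1 - int e2 = int (v i) - int (v j) + int n * d" unfolding e1_def e2_def
      by (simp add: algebra_simps flip: right_diff_distrib)
    also have "\<dots> = k" using d by simp
    finally show ?thesis using g1 g2 by blast
  next
    case False
    have main: "?thesis" if ij: "i < m" "j < m" "i \<noteq> j" "f i = f j" "v i \<le> v j" for i j
    proof -
      have "int n dvd (int (v j) - int (v i))" using ij(4) unfolding f_def
        by (metis mod_eq_dvd_iff)
      then obtain t' where t': "int (v j) - int (v i) = int n * t'" by blast
      have "t' \<ge> 0" using t' ij(5) n0
        by (smt (verit) of_nat_le_iff of_nat_0_less_iff zero_le_mult_iff)
      define t where "t = nat t'"
      have vt: "v j = v i + n * t" using t' \<open>t' \<ge> 0\<close> unfolding t_def
        by (metis add.commute diff_add_cancel int_nat_eq of_nat_add of_nat_eq_iff of_nat_mult)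
      have G: "Good p r n a e" if "e \<ge> v j + 1" for e
        using good_pair[OF p cp n0 mr[OF ij(1)] mr[OF ij(2)] ij(3)] a mr ij vt that
        unfolding v_def by blast
      define e2 where "e2 = v j + 1 + nat \<bar>k\<bar>"
      define e1 where "e1 = nat (int e2 + k)"
      have "int e1 - int e2 = k" unfolding e1_def e2_def by (simp add: abs_if)
      moreover have "e1 \<ge> v j + 1" unfolding e1_def e2_def by simp
      moreover have "Good p r n a e2" using G[of e2] unfolding e2_def by simp
      ultimately show ?thesis using G[of e1] by blast
    qed
    from False obtain i j where ij: "i < m" "j < m" "i \<noteq> j" "f i = f j"
      unfolding inj_on_def by auto
    show ?thesis
    proof (cases "v i \<le> v j")
      case True then show ?thesis using main ij by blast
    next
      case False then show ?thesis using main[of j i] ij by simp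
    qed
  qed
qed



lemma part1:
  fixes n p r :: nat and a :: "nat \<Rightarrow> int"
  assumes p: "prime p" and cp: "coprime n (p * (p - 1))" and n3: "n \<ge> 3"
    and r: "n div 2 + 1 \<le> r" and a: "\<forall>i<r. a i \<noteq> 0"
  shows "padic_dense p (ratio_set r (diag_form r n a))"
  unfolding padic_dense_def
proof (intro allI impI)
  fix q :: rat and \<epsilon> :: real
  assume eps: "\<epsilon> > 0"
  define F where "F = diag_form r n a"
  have n0: "n > 0" using n3 by simp
  have r0: "0 < r" using r by simp
  have pg: "real p > 1" using prime_gt_1_nat[OF p] by simp
  have pi: "prime (int p)" using p by simp
  have pe: "prime_elem (int p)" using p by simp
  have P0: "\<And>k. int p ^ k \<noteq> 0" using p by (simp add: prime_gt_0_nat)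
  show "\<exists>s\<in>ratio_set r (diag_form r n a). padic_abs p (s - q) < \<epsilon>"
  proof (cases "q = 0")
    case True
    define y :: "nat \<Rightarrow> int" where "y = (\<lambda>l. if l = 0 then 1 else 0)"
    have Fy: "F y = a 0" unfolding F_def y_def using diag_single[OF r0 n0, of a 1] by simp
    have "(of_int (F (\<lambda>_. 0)) / of_int (F y) :: rat) \<in> ratio_set r F"
    proof -
      have "a 0 \<noteq> 0" using a r0 by simp
      hence "F y \<noteq> 0" using Fy by simp
      moreover have "\<forall>i\<ge>r. y i = 0" "\<forall>i\<ge>r. (\<lambda>_. 0::int) i = 0" unfolding y_def using r0 by auto
      ultimately show ?thesis unfolding ratio_set_def by blast
    qed
    moreover have "F (\<lambda>_. 0) = 0" unfolding F_def diag_form_def using n0 by (simp add: zero_power)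
    ultimately show ?thesis using True eps unfolding F_def padic_abs_def by force
  next
    case False
    obtain A B where AB: "quotient_of q = (A, B)" by (cases "quotient_of q")
    have B0: "B > 0" using quotient_of_denom_pos[OF AB] .
    have qAB: "q = of_int A / of_int B" using quotient_of_div[OF AB] .
    have A0: "A \<noteq> 0" using qAB False by auto
    define k1 where "k1 = multiplicity (int p) A"
    define k2 where "k2 = multiplicity (int p) B"
    define b where "b = A div int p ^ k1"
    define c where "c = B div int p ^ k2"
    have Ad: "A = int p ^ k1 * b" "\<not> int p dvd b" using decomp[OF p A0] unfolding k1_def b_def by auto
    have Bd: "B = int p ^ k2 * c" "\<not> int p dvd c" using decomp[OF p] B0 unfolding k2_def c_def by auto
    obtain e1 e2 where G: "Good p r n a e1" "Good p r n a e2" and ek: "int e1 - int e2 = int k1 - int k2"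
      using exists_e[OF p cp n3 r a] by blast
    have "\<exists>N0::nat. (1 / real p) ^ N0 < \<epsilon>" using pg eps by (intro real_arch_pow_inv) auto
    then obtain N0 :: nat where N0: "(1 / real p) ^ N0 < \<epsilon>" by blast
    define N where "N = N0 + nat \<bar>int k1 - int k2\<bar> + 1"
    obtain x where x: "\<forall>l\<ge>r. x l = 0" "int p ^ (e1 + N) dvd (F x - int p ^ e1 * b)"
      using G(1) Ad(2) unfolding Good_def F_def by blast
    obtain y where y: "\<forall>l\<ge>r. y l = 0" "int p ^ (e2 + N) dvd (F y - int p ^ e2 * c)"
      using G(2) Bd(2) unfolding Good_def F_def by blast
    obtain gam where "F x - int p ^ e1 * b = int p ^ (e1 + N) * gam"
      using x(2) by (elim dvdE)
    hence gam: "F x = int p ^ e1 * (b + int p ^ N * gam)"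
      by (simp add: power_add algebra_simps eq_diff_eq)
    obtain del where "F y - int p ^ e2 * c = int p ^ (e2 + N) * del"
      using y(2) by (elim dvdE)
    hence del: "F y = int p ^ e2 * (c + int p ^ N * del)"
      by (simp add: power_add algebra_simps eq_diff_eq)
    have N1: "N \<ge> 1" unfolding N_def by simp
    have "int p dvd int p ^ N * del" using N1 by (simp add: dvd_power)
    hence nd: "\<not> int p dvd (c + int p ^ N * del)" using Bd(2)
      by (simp add: dvd_add_left_iff)
    hence nd0: "c + int p ^ N * del \<noteq> 0" by auto
    have Fy0: "F y \<noteq> 0" using del nd0 P0 by simp
    have mFy: "multiplicity (int p) (F y) = e2"
      by (rule multiplicity_decomposeI[OF del nd]) (use pi in simp)
    define t where "t = (of_int (F x) / of_int (F y) :: rat)"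
    have tin: "t \<in> ratio_set r (diag_form r n a)"
      unfolding ratio_set_def t_def using x(1) y(1) Fy0 unfolding F_def by blast
    define Z where "Z = F x * B - A * F y"
    have hE: "k1 + e2 = e1 + k2" using ek by linarith
    have pp: "int p ^ k1 * int p ^ e2 = int p ^ e1 * int p ^ k2"
      by (simp only: power_add[symmetric] hE)
    have Zx: "F x * B = int p ^ e1 * int p ^ k2 * (b * c + int p ^ N * gam * c)"
      unfolding gam Bd(1) by (simp add: algebra_simps)
    have Zy: "A * F y = (int p ^ k1 * int p ^ e2) * (b * c + int p ^ N * b * del)"
      unfolding del Ad(1) by (simp add: algebra_simps)
    have Zeq: "Z = int p ^ (e1 + k2 + N) * (gam * c - b * del)"
      unfolding Z_def Zx Zy pp by (simp add: power_add algebra_simps)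
    have tq: "t - q = of_int Z / of_int (F y * B)"
      unfolding t_def qAB Z_def using Fy0 B0 by (simp add: field_simps)
    show ?thesis
    proof (cases "Z = 0")
      case True
      have "padic_abs p (t - q) = 0" unfolding tq True padic_abs_def by simp
      hence "padic_abs p (t - q) < \<epsilon>" using eps by simp
      thus ?thesis using tin by blast
    next
      case False
      have FB0: "F y * B \<noteq> 0" using Fy0 B0 by simp
      have mZ: "multiplicity (int p) Z \<ge> e1 + k2 + N"
      proof -
        have dZ: "int p ^ (e1 + k2 + N) dvd Z" unfolding Zeq by simp
        have nu: "\<not> is_unit (int p)" using pi not_prime_unit by blast
        show ?thesis using multiplicity_geI[OF False nu dZ] .
      qed
      have mFB: "multiplicity (int p) (F y * B) = e2 + k2"
        using prime_elem_multiplicity_mult_distrib[OF pe Fy0] B0 mFy unfolding k2_def by simp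
      have ex: "real N0 \<le> real (multiplicity (int p) Z) - real (multiplicity (int p) (F y * B))"
        using mZ mFB ek unfolding N_def by linarith
      have "padic_abs p (t - q) = real p powr (- (real (multiplicity (int p) Z) - real (multiplicity (int p) (F y * B))))"
        unfolding tq using abs_rat_int[OF p False FB0] .
      also have "\<dots> \<le> real p powr (- real N0)"
        using ex pg by (intro powr_mono) auto
      also have "\<dots> = (1 / real p) ^ N0"
        using pg by (simp add: powr_minus powr_realpow power_one_over inverse_eq_divide)
      finally have "padic_abs p (t - q) < \<epsilon>" using N0 by simp
      thus ?thesis using tin by blast
    qed
  qed
qed


theorem corollary1p4:
  fixes n p :: nat
  assumes "n \<ge> 3" and "prime p" and "coprime n (p * (p - 1))"
  shows "(\<forall>r \<ge> n div 2 + 1. \<forall>a :: nat \<Rightarrow> int. (\<forall>i<r. a i \<noteq> 0) \<longrightarrow>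
            padic_dense p (ratio_set r (diag_form r n a)))
       \<and> (\<exists>a :: nat \<Rightarrow> int. (\<forall>i < n div 2. a i \<noteq> 0) \<and>
            \<not> padic_dense p (ratio_set (n div 2) (diag_form (n div 2) n a)))"
proof
  show "\<forall>r \<ge> n div 2 + 1. \<forall>a :: nat \<Rightarrow> int. (\<forall>i<r. a i \<noteq> 0) \<longrightarrow>
            padic_dense p (ratio_set r (diag_form r n a))"
    using part1[OF assms(2,3,1)] by blast
next
  have "\<forall>i < n div 2. int p ^ i \<noteq> 0" using assms(2) by (simp add: prime_gt_0_nat)
  moreover have "\<not> padic_dense p (ratio_set (n div 2) (diag_form (n div 2) n (\<lambda>i. int p ^ i)))"
    using part2[OF assms(2,1)] .
  ultimately show "\<exists>a :: nat \<Rightarrow> int. (\<forall>i < n div 2. a i \<noteq> 0) \<and>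
            \<not> padic_dense p (ratio_set (n div 2) (diag_form (n div 2) n a))"
    by blast
qed

end
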